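(* Let $\mathbf{A}\in\mathbb{R}^{m\times n}$ be $s$-regular, where $s$ is an integer with $0<s<n$, let $\mathbf{b}\in\mathbb{R}^m$, and let $f(\mathbf{x})=\|\mathbf{A}\mathbf{x}-\mathbf{b}\|^2$, whose gradient is Lipschitz with constant $L(f)=2\lambda_{\max}(\mathbf{A}^T\mathbf{A})$. Then any sequence generated by the IHT method with constant $L>L(f)$ converges to an $L$-stationary point of the problem (P): minimize $f(\mathbf{x})$ subject to $\|\mathbf{x}\|_0\le s$.
   Context: A matrix $\mathbf{A}$ is $s$-regular if for every $I\subseteq\{1,\dots,n\}$ with $|I|=s$ the columns of $\mathbf{A}$ indexed by $I$ are linearly independent. $C_s=\{\mathbf{x}:\|\mathbf{x}\|_0\le s\}$ where $\|\mathbf{x}\|_0$ is the number of nonzero components. $P_{C_s}(\mathbf{y})=\operatorname{argmin}_{\mathbf{x}\in C_s}\|\mathbf{x}-\mathbf{y}\|^2$ (possibly multi-valued). The IHT method with constant $L$: choose $\mathbf{x}^0\in C_s$ and for $k=0,1,2,\dots$ pick any $\mathbf{x}^{k+1}\in P_{C_s}\!\left(\mathbf{x}^k-\frac1L\nabla f(\mathbf{x}^k)\right)$. A point $\mathbf{x}^*\in C_s$ is $L$-stationary if $\mathbf{x}^*\in P_{C_s}\!\left(\mathbf{x}^*-\frac1L\nabla f(\mathbf{x}^* )\right)$. *)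

theory Defs
  imports "HOL-Analysis.Analysis"
begin

definition l0norm :: "real ^ 'n \<Rightarrow> nat" where
  "l0norm x = card {i. x $ i \<noteq> 0}"

definition sparse_set :: "nat \<Rightarrow> (real ^ 'n) set" where
  "sparse_set s = {x. l0norm x \<le> s}"

definition proj_sparse :: "nat \<Rightarrow> real ^ 'n \<Rightarrow> (real ^ 'n) set" where
  "proj_sparse s y = {x \<in> sparse_set s. \<forall>z \<in> sparse_set s. (norm (x - y))\<^sup>2 \<le> (norm (z - y))\<^sup>2}"

text \<open>s-regularity: every s columns are linearly independent (as a family).\<close>
definition s_regular :: "nat \<Rightarrow> real ^ 'n ^ 'm \<Rightarrow> bool" where
  "s_regular s A \<longleftrightarrow> (\<forall>I :: 'n set. card I = s \<longrightarrow>
      inj_on (\<lambda>i. column i A) I \<and> independent ((\<lambda>i. column i A) ` I))"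

definition lambda_max :: "real ^ 'n ^ 'n \<Rightarrow> real" where
  "lambda_max M = Max {c. \<exists>v. v \<noteq> 0 \<and> M *v v = c *\<^sub>R v}"

definition IHT_seq :: "nat \<Rightarrow> real \<Rightarrow> (real ^ 'n \<Rightarrow> real ^ 'n) \<Rightarrow> (nat \<Rightarrow> real ^ 'n) \<Rightarrow> bool" where
  "IHT_seq s L g x \<longleftrightarrow> x 0 \<in> sparse_set s \<and>
     (\<forall>k. x (Suc k) \<in> proj_sparse s (x k - (1 / L) *\<^sub>R g (x k)))"

definition L_stationary :: "nat \<Rightarrow> real \<Rightarrow> (real ^ 'n \<Rightarrow> real ^ 'n) \<Rightarrow> real ^ 'n \<Rightarrow> bool" where
  "L_stationary s L g x \<longleftrightarrow> x \<in> sparse_set s \<and> x \<in> proj_sparse s (x - (1 / L) *\<^sub>R g x)"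

end

theory Submission
  imports Defs
begin

lemma adj: fixes A :: "real^'n^'m" shows "(transpose A *v u) \<bullet> w = u \<bullet> (A *v w)"
  by (metis dot_lmul_matrix transpose_transpose vector_transpose_matrix)

lemma norm_diff_sq: fixes a b :: "'a::real_inner"
  shows "(norm (a - t *\<^sub>R b))\<^sup>2 = (norm a)\<^sup>2 - 2*t*(a \<bullet> b) + t\<^sup>2*(norm b)\<^sup>2"
  unfolding power2_norm_eq_inner by (simp add: inner_diff_left inner_diff_right inner_commute algebra_simps power2_eq_square)

lemma rayleigh:
  fixes A :: "real^'n^'m"
  shows "lambda_max (transpose A ** A) \<ge> 0 \<and>
     (\<forall>h. (norm (A *v h))\<^sup>2 \<le> lambda_max (transpose A ** A) * (norm h)\<^sup>2)"
proof -
  define M where "M = transpose A ** A"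
  have Mv: "M *v v = transpose A *v (A *v v)" for v by (simp add: M_def matrix_vector_mul_assoc)
  have sym: "(M *v v) \<bullet> w = (A *v v) \<bullet> (A *v w)" for v w using adj Mv by metis
  have ne: "sphere (0::real^'n) 1 \<noteq> {}" by simp
  obtain v0 where v0: "v0 \<in> sphere 0 1" "\<forall>y\<in>sphere 0 1. (norm (A *v y))\<^sup>2 \<le> (norm (A *v v0))\<^sup>2"
  proof -
    have "continuous_on (sphere 0 1) (\<lambda>v. (norm (A *v v))\<^sup>2)" by (intro continuous_intros)
    from continuous_attains_sup[OF compact_sphere ne this] show ?thesis using that by blast
  qed
  define \<mu> where "\<mu> = (norm (A *v v0))\<^sup>2"
  have nv0: "norm v0 = 1" using v0 by simp
  have bound: "(norm (A *v u))\<^sup>2 \<le> \<mu> * (norm u)\<^sup>2" for u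
  proof (cases "u = 0")
    case True then show ?thesis by simp
  next
    case False
    then have np: "norm u > 0" by simp
    have "(inverse (norm u)) *\<^sub>R u \<in> sphere 0 1" using np by simp
    then have "(norm (A *v ((inverse (norm u)) *\<^sub>R u)))\<^sup>2 \<le> \<mu>" using v0 \<mu>_def by blast
    then have "(inverse (norm u))\<^sup>2 * (norm (A *v u))\<^sup>2 \<le> \<mu>"
      by (simp add: matrix_vector_mult_scaleR power_mult_distrib)
    then have "(inverse (norm u))\<^sup>2 * (norm (A *v u))\<^sup>2 * (norm u)\<^sup>2 \<le> \<mu> * (norm u)\<^sup>2"
      by (simp add: mult_right_mono)
    moreover have "(inverse (norm u))\<^sup>2 * (norm u)\<^sup>2 = 1"
      by (metis less_irrefl np power_mult_distrib left_inverse power_one)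
    ultimately show ?thesis by (metis mult.assoc mult.commute mult_1_left)
  qed
  define w where "w = \<mu> *\<^sub>R v0 - M *v v0"
  have w0: "w = 0"
  proof (rule ccontr)
    assume "w \<noteq> 0"
    define W where "W = (norm w)\<^sup>2"
    have Wp: "W > 0" using \<open>w \<noteq> 0\<close> W_def by simp
    define c where "c = \<mu> * W - (norm (A *v w))\<^sup>2"
    have c0: "c \<ge> 0" using bound[of w] c_def W_def by simp
    define t where "t = W / (c + 1)"
    have tp: "t > 0" using Wp c0 t_def by simp
    have b1: "(norm (A *v v0 - t *\<^sub>R (A *v w)))\<^sup>2 \<le> \<mu> * (norm (v0 - t *\<^sub>R w))\<^sup>2"
      using bound[of "v0 - t *\<^sub>R w"] by (simp add: matrix_vector_mult_diff_distrib matrix_vector_mult_scaleR)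
    have key: "(A *v v0) \<bullet> (A *v w) = \<mu> * (v0 \<bullet> w) - W"
    proof -
      have "(A *v v0) \<bullet> (A *v w) = (M *v v0) \<bullet> w" using sym by simp
      also have "M *v v0 = \<mu> *\<^sub>R v0 - w" using w_def by simp
      finally show ?thesis by (simp add: W_def inner_diff_left power2_norm_eq_inner)
    qed
    have "\<mu> - 2*t*(\<mu> * (v0 \<bullet> w) - W) + t\<^sup>2 * (norm (A *v w))\<^sup>2 \<le> \<mu> * (1 - 2*t*(v0 \<bullet> w) + t\<^sup>2 * W)"
      using b1 unfolding norm_diff_sq key using nv0 \<mu>_def W_def by simp
    then have "2*t*W \<le> t\<^sup>2 * c" unfolding c_def by (simp add: algebra_simps)
    then have "2*W \<le> t * c" using tp by (simp add: power2_eq_square)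
    moreover have "t * c < W" using Wp c0 unfolding t_def by (simp add: field_simps)
    ultimately show False using Wp by simp
  qed
  have ev0: "M *v v0 = \<mu> *\<^sub>R v0" using w0 w_def by simp
  have v0nz: "v0 \<noteq> 0" using nv0 by auto
  define E where "E = {c. \<exists>v. v \<noteq> 0 \<and> M *v v = c *\<^sub>R v}"
  have muE: "\<mu> \<in> E" using ev0 v0nz E_def by auto
  define ev where "ev c = (SOME v. v \<noteq> 0 \<and> M *v v = c *\<^sub>R v)" for c
  have evp: "ev c \<noteq> 0 \<and> M *v ev c = c *\<^sub>R ev c" if "c \<in> E" for c
    using that unfolding E_def ev_def mem_Collect_eq by (rule someI_ex)
  have inj: "inj_on ev E"
  proof (rule inj_onI)
    fix c d assume "c \<in> E" "d \<in> E" "ev c = ev d"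
    then have "c *\<^sub>R ev c = d *\<^sub>R ev c" "ev c \<noteq> 0" using evp by metis+
    then show "c = d" by simp
  qed
  have orth: "pairwise orthogonal (ev ` E)"
  proof (clarsimp simp: pairwise_def)
    fix c d assume cd: "c \<in> E" "d \<in> E" "ev c \<noteq> ev d"
    then have "c \<noteq> d" by auto
    have "c * (ev c \<bullet> ev d) = (M *v ev c) \<bullet> ev d" using evp[OF cd(1)] by simp
    also have "\<dots> = (M *v ev d) \<bullet> ev c" using sym by (simp add: inner_commute)
    also have "\<dots> = d * (ev c \<bullet> ev d)" using evp[OF cd(2)] by (simp add: inner_commute)
    finally show "orthogonal (ev c) (ev d)" using \<open>c \<noteq> d\<close> unfolding orthogonal_def by simp
  qed
  have "0 \<notin> ev ` E" using evp by auto
  then have "independent (ev ` E)" using pairwise_orthogonal_independent orth by blast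
  then have "finite (ev ` E)" using independent_bound by blast
  then have finE: "finite E" using finite_imageD inj by blast
  have "\<mu> \<le> lambda_max M" unfolding lambda_max_def E_def[symmetric] using finE muE by simp
  moreover have "\<mu> \<ge> 0" using \<mu>_def by simp
  ultimately show ?thesis using bound unfolding M_def
    by (metis (no_types, opaque_lifting) mult_right_mono order_trans zero_le_power2)
qed

definition Vs :: "'n set \<Rightarrow> (real ^ 'n) set" where
  "Vs I = {x. \<forall>i. i \<notin> I \<longrightarrow> x $ i = 0}"

lemma ext_support:
  fixes x :: "real ^ 'n"
  assumes "l0norm x \<le> s" "s \<le> CARD('n)"
  shows "\<exists>I. card I = s \<and> x \<in> Vs I"
proof -
  define S where "S = {i. x $ i \<noteq> 0}"
  have cS: "card S \<le> s" using assms(1) unfolding S_def l0norm_def by simp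
  have "card (UNIV - S) = CARD('n) - card S" by (simp add: card_Diff_subset)
  then have "s - card S \<le> card (UNIV - S)" using assms cS by simp
  then obtain T where T: "T \<subseteq> UNIV - S" "card T = s - card S"
    using obtain_subset_with_card_n by metis
  have "card (S \<union> T) = card S + card T"
    using T by (intro card_Un_disjoint) auto
  then have "card (S \<union> T) = s" using T cS by simp
  moreover have "x \<in> Vs (S \<union> T)" unfolding Vs_def S_def by auto
  ultimately show ?thesis by blast
qed

lemma regular_inj:
  fixes A :: "real ^ 'n ^ 'm"
  assumes reg: "s_regular s A" and cI: "card I = s" and x: "x \<in> Vs I" and Ax: "A *v x = 0"
  shows "x = 0"
proof -
  let ?c = "\<lambda>i. column i A"
  have inj: "inj_on ?c I" and ind: "independent (?c ` I)" using reg cI unfolding s_regular_def by auto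
  have fin: "finite I" by simp
  have "A *v x = (\<Sum>i\<in>UNIV. x $ i *\<^sub>R ?c i)"
    by (simp add: matrix_mult_sum scalar_mult_eq_scaleR)
  also have "\<dots> = (\<Sum>i\<in>I. x $ i *\<^sub>R ?c i)"
    using x unfolding Vs_def by (intro sum.mono_neutral_right) auto
  also have "\<dots> = (\<Sum>v\<in>?c ` I. x $ (inv_into I ?c v) *\<^sub>R v)"
    by (subst sum.reindex[OF inj]) (auto intro!: sum.cong simp: inv_into_f_f[OF inj])
  finally have z: "(\<Sum>v\<in>?c ` I. x $ (inv_into I ?c v) *\<^sub>R v) = 0" using Ax by simp
  have "x $ i = 0" for i
  proof (cases "i \<in> I")
    case True
    have "x $ (inv_into I ?c (?c i)) = 0"
      using ind z True unfolding real_vector.independent_explicit_module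
      by (meson fin finite_imageI imageI order_refl)
    then show ?thesis using True inv_into_f_f[OF inj] by simp
  next
    case False then show ?thesis using x Vs_def by auto
  qed
  then show ?thesis by (simp add: vec_eq_iff)
qed

lemma Vs_subspace: "subspace (Vs I)"
  unfolding subspace_def Vs_def by auto

lemma sparse_bounded:
  fixes A :: "real ^ 'n ^ 'm"
  assumes reg: "s_regular s A" and sn: "s \<le> CARD('n)"
  shows "bounded {x \<in> sparse_set s. norm (A *v x) \<le> R}"
proof -
  have "\<exists>e>0. \<forall>x\<in>Vs I. norm (A *v x) \<ge> e * norm x" if cI: "card I = s" for I
  proof (rule injective_imp_isometric)
    show "closed (Vs I)" by (rule closed_subspace[OF Vs_subspace])
    show "subspace (Vs I)" by (rule Vs_subspace)
    show "bounded_linear ((*v) A)" by (simp add: linear_conv_bounded_linear)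
    show "\<forall>x\<in>Vs I. A *v x = 0 \<longrightarrow> x = 0" using regular_inj[OF reg cI] by blast
  qed
  then obtain e where e: "\<And>I. card I = s \<Longrightarrow> e I > 0 \<and> (\<forall>x\<in>Vs I. norm (A *v x) \<ge> e I * norm x)"
    by metis
  have sub: "{x \<in> sparse_set s. norm (A *v x) \<le> R} \<subseteq> (\<Union>I\<in>{I. card I = s}. cball 0 (R / e I))"
  proof
    fix x assume "x \<in> {x \<in> sparse_set s. norm (A *v x) \<le> R}"
    then have xs: "l0norm x \<le> s" and xR: "norm (A *v x) \<le> R" unfolding sparse_set_def by auto
    obtain I where I: "card I = s" "x \<in> Vs I" using ext_support[OF xs sn] by blast
    have "e I * norm x \<le> R" using e[OF I(1)] I(2) xR by force
    then have "norm x \<le> R / e I" using e[OF I(1)] by (simp add: field_simps)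
    then show "x \<in> (\<Union>I\<in>{I. card I = s}. cball 0 (R / e I))" using I by auto
  qed
  show ?thesis by (rule bounded_subset[OF _ sub]) (auto intro: bounded_UN)
qed

lemma grad_eq:
  fixes A :: "real ^ 'n ^ 'm"
  assumes f: "\<And>y. f y = (norm (A *v y - b))\<^sup>2"
    and d: "\<And>y. (f has_derivative (\<lambda>h. g y \<bullet> h)) (at y)"
  shows "g y = 2 *\<^sub>R (transpose A *v (A *v y - b))"
proof -
  define G where "G = 2 *\<^sub>R (transpose A *v (A *v y - b))"
  have fe: "f = (\<lambda>y. (A *v y - b) \<bullet> (A *v y - b))"
    using f by (simp add: fun_eq_iff power2_norm_eq_inner)
  have lin: "((\<lambda>y. A *v y - b) has_derivative (\<lambda>h. A *v h)) (at y)"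
  proof -
    have "bounded_linear ((*v) A)" by (simp add: linear_conv_bounded_linear)
    then have "(((*v) A) has_derivative ((*v) A)) (at y)" by (rule bounded_linear_imp_has_derivative)
    from has_derivative_diff[OF this has_derivative_const[of b]] show ?thesis by simp
  qed
  have "(f has_derivative (\<lambda>h. G \<bullet> h)) (at y)"
    unfolding fe
  proof (rule has_derivative_eq_rhs[OF has_derivative_inner[OF lin lin]])
    show "(\<lambda>h. (A *v y - b) \<bullet> (A *v h) + (A *v h) \<bullet> (A *v y - b)) = (\<lambda>h. G \<bullet> h)"
      unfolding G_def inner_scaleR_left adj by (simp add: inner_commute fun_eq_iff)
  qed
  from has_derivative_unique[OF d this] have "\<And>h. g y \<bullet> h = G \<bullet> h" by metis
  then have "(g y - G) \<bullet> (g y - G) = 0" by (simp add: inner_diff_left)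
  then show ?thesis unfolding G_def by simp
qed

lemma nsq: "(norm (v::real^'n))\<^sup>2 = (\<Sum>i\<in>UNIV. (v $ i)\<^sup>2)"
  unfolding power2_norm_eq_inner inner_vec_def by (simp add: power2_eq_square)

lemma sum_split_at: fixes t :: "'n::finite \<Rightarrow> real"
  shows "(\<Sum>k\<in>UNIV. t k) = t j + (\<Sum>k\<in>UNIV. if k = j then 0 else t k)"
proof -
  have "(\<Sum>k\<in>UNIV. t k) = (\<Sum>k\<in>UNIV. (if k = j then t j else 0) + (if k = j then 0 else t k))"
    by (rule sum.cong) auto
  also have "\<dots> = t j + (\<Sum>k\<in>UNIV. if k = j then 0 else t k)"
    by (simp add: sum.distrib)
  finally show ?thesis .
qed

lemma stat_coord:
  fixes p :: "real ^ 'n"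
  assumes L: "L > 0" and st: "L_stationary s L g p"
    and upd: "l0norm (\<chi> k. if k = j then (p - (1/L) *\<^sub>R g p) $ j else p $ k) \<le> s"
  shows "g p $ j = 0"
proof -
  define y where "y = p - (1/L) *\<^sub>R g p"
  define z where "z = (\<chi> k. if k = j then y $ j else p $ k)"
  have zs: "z \<in> sparse_set s" using upd unfolding z_def y_def sparse_set_def by simp
  have "(norm (p - y))\<^sup>2 \<le> (norm (z - y))\<^sup>2"
    using st zs unfolding L_stationary_def proj_sparse_def y_def by auto
  moreover have "(norm (p - y))\<^sup>2 = ((p - y) $ j)\<^sup>2 + (\<Sum>k\<in>UNIV. if k = j then 0 else ((p - y) $ k)\<^sup>2)"
    unfolding nsq by (rule sum_split_at)
  moreover have "(norm (z - y))\<^sup>2 = (\<Sum>k\<in>UNIV. if k = j then 0 else ((p - y) $ k)\<^sup>2)"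
    unfolding nsq z_def by (rule sum.cong) auto
  ultimately have "((p - y) $ j)\<^sup>2 \<le> 0" by simp
  then have "(p - y) $ j = 0" by simp
  then show ?thesis using L unfolding y_def by simp
qed

lemma stat_char:
  fixes p :: "real ^ 'n"
  assumes L: "L > 0" and st: "L_stationary s L g p" and sn: "s \<le> CARD('n)"
  shows "\<exists>I. card I = s \<and> p \<in> Vs I \<and> (\<forall>i\<in>I. g p $ i = 0)"
proof -
  define y where "y = p - (1/L) *\<^sub>R g p"
  define S where "S = {i. p $ i \<noteq> 0}"
  have cS: "card S \<le> s" using st unfolding L_stationary_def sparse_set_def l0norm_def S_def by simp
  have suppz: "{k. (\<chi> k. if k = j then y $ j else p $ k) $ k \<noteq> 0} \<subseteq> insert j S" for j
    unfolding S_def by auto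
  show ?thesis
  proof (cases "card S = s")
    case True
    have "g p $ j = 0" if "j \<in> S" for j
    proof (rule stat_coord[OF L st])
      have "insert j S = S" using that by auto
      then have "card {k. (\<chi> k. if k = j then y $ j else p $ k) $ k \<noteq> 0} \<le> card S"
        using suppz[of j] by (metis card_mono finite)
      then show "l0norm (\<chi> k. if k = j then (p - (1/L) *\<^sub>R g p) $ j else p $ k) \<le> s"
        using True unfolding l0norm_def y_def by simp
    qed
    moreover have "p \<in> Vs S" unfolding Vs_def S_def by auto
    ultimately show ?thesis using True by blast
  next
    case False
    then have cS': "card S < s" using cS by simp
    have "g p $ j = 0" for j
    proof (rule stat_coord[OF L st])
      have "card {k. (\<chi> k. if k = j then y $ j else p $ k) $ k \<noteq> 0} \<le> card (insert j S)"
        using suppz[of j] by (metis card_mono finite)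
      also have "\<dots> \<le> Suc (card S)" by (simp add: card_insert_le_m1)
      finally show "l0norm (\<chi> k. if k = j then (p - (1/L) *\<^sub>R g p) $ j else p $ k) \<le> s"
        using cS' unfolding l0norm_def y_def by simp
    qed
    moreover obtain I where "card I = s" "p \<in> Vs I"
      using ext_support[OF _ sn, of p] cS unfolding l0norm_def S_def by blast
    ultimately show ?thesis by blast
  qed
qed

lemma stat_unique:
  fixes A :: "real ^ 'n ^ 'm"
  assumes reg: "s_regular s A" and cI: "card I = s"
    and g: "\<And>y. g y = 2 *\<^sub>R (transpose A *v (A *v y - b))"
    and p: "p \<in> Vs I" "\<forall>i\<in>I. g p $ i = 0" and q: "q \<in> Vs I" "\<forall>i\<in>I. g q $ i = 0"
  shows "p = q"
proof -
  have "(g p - g q) \<bullet> (p - q) = (\<Sum>k\<in>UNIV. (g p - g q) $ k * (p - q) $ k)"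
    by (simp add: inner_vec_def)
  also have "\<dots> = 0" using p q unfolding Vs_def
    apply (intro sum.neutral ballI)
    subgoal for k by (cases "k \<in> I") auto
    done
  finally have z: "(g p - g q) \<bullet> (p - q) = 0" .
  have "g p - g q = 2 *\<^sub>R (transpose A *v (A *v (p - q)))"
    unfolding g by (simp add: matrix_vector_mult_diff_distrib algebra_simps scaleR_diff_right)
  then have "(g p - g q) \<bullet> (p - q) = 2 * ((A *v (p - q)) \<bullet> (A *v (p - q)))"
    by (simp only: inner_scaleR_left adj)
  with z have "A *v (p - q) = 0" by simp
  moreover have "p - q \<in> Vs I" using p q unfolding Vs_def by auto
  ultimately have "p - q = 0" using regular_inj[OF reg cI] by blast
  then show ?thesis by simp
qed

lemma stat_finite:
  fixes A :: "real ^ 'n ^ 'm"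
  assumes reg: "s_regular s A" and L: "L > 0" and sn: "s \<le> CARD('n)"
    and g: "\<And>y. g y = 2 *\<^sub>R (transpose A *v (A *v y - b))"
  shows "finite {p. L_stationary s L g p}"
proof -
  define Q where "Q I = (SOME p. p \<in> Vs I \<and> (\<forall>i\<in>I. g p $ i = 0))" for I
  have "{p. L_stationary s L g p} \<subseteq> Q ` UNIV"
  proof
    fix p assume "p \<in> {p. L_stationary s L g p}"
    then obtain I where I: "card I = s" "p \<in> Vs I" "\<forall>i\<in>I. g p $ i = 0"
      using stat_char[OF L _ sn] by blast
    have ex: "\<exists>p. p \<in> Vs I \<and> (\<forall>i\<in>I. g p $ i = 0)" using I by blast
    have "Q I \<in> Vs I \<and> (\<forall>i\<in>I. g (Q I) $ i = 0)" unfolding Q_def by (rule someI_ex[OF ex])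
    then have "p = Q I" using stat_unique[OF reg I(1) g, of p "Q I"] I by simp
    then show "p \<in> Q ` UNIV" by blast
  qed
  then show ?thesis by (rule finite_subset) simp
qed

lemma conv_finite_limits:
  fixes x :: "nat \<Rightarrow> 'a::heine_borel"
  assumes bnd: "bounded (range x)" and step: "(\<lambda>k. dist (x (Suc k)) (x k)) \<longlonglongrightarrow> 0"
    and fin: "finite P" and lim: "\<And>r l. strict_mono r \<Longrightarrow> (x \<circ> r) \<longlonglongrightarrow> l \<Longrightarrow> l \<in> P"
  shows "\<exists>l. x \<longlonglongrightarrow> l \<and> l \<in> P"
proof -
  have near: "eventually (\<lambda>k. \<exists>p\<in>P. dist (x k) p < e) sequentially" if e: "e > 0" for e
  proof (rule ccontr)
    assume "\<not> ?thesis"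
    then obtain r :: "nat \<Rightarrow> nat" where r: "strict_mono r" "\<forall>n. \<not> (\<exists>p\<in>P. dist (x (r n)) p < e)"
      using not_eventually_sequentiallyD by blast
    have "bounded (range (x \<circ> r))" using bnd by (rule bounded_subset) auto
    then obtain l r2 where r2: "strict_mono r2" "((x \<circ> r) \<circ> r2) \<longlonglongrightarrow> l"
      using bounded_imp_convergent_subsequence by blast
    have "strict_mono (r \<circ> r2)" using r(1) r2(1) by (simp add: strict_mono_o)
    moreover have "(x \<circ> (r \<circ> r2)) \<longlonglongrightarrow> l" using r2(2) by (simp add: o_assoc)
    ultimately have lP: "l \<in> P" by (rule lim)
    from r2(2) e have "eventually (\<lambda>n. dist (((x \<circ> r) \<circ> r2) n) l < e) sequentially"
      by (rule tendstoD)
    then obtain n where "dist (x (r (r2 n))) l < e" by (auto dest: eventually_happens)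
    then show False using r(2) lP by blast
  qed
  define D where "D = (\<lambda>(p, q). dist p q) ` {(p, q). p \<in> P \<and> q \<in> P \<and> p \<noteq> q}"
  have finD: "finite D" unfolding D_def
    by (rule finite_imageI, rule finite_subset[of _ "P \<times> P"]) (use fin in auto)
  define \<delta> where "\<delta> = Min (insert 1 D)"
  have dpos: "\<delta> > 0" unfolding \<delta>_def using finD by (auto simp: Min_gr_iff D_def)
  have sep: "\<delta> \<le> dist p q" if "p \<in> P" "q \<in> P" "p \<noteq> q" for p q
  proof -
    have "dist p q \<in> insert 1 D" unfolding D_def using that by force
    then show ?thesis unfolding \<delta>_def using finD by simp
  qed
  have d3: "\<delta>/3 > 0" using dpos by simp
  have "eventually (\<lambda>k. (\<exists>p\<in>P. dist (x k) p < \<delta>/3) \<and> dist (x (Suc k)) (x k) < \<delta>/3) sequentially"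
    using near[OF d3] order_tendstoD(2)[OF step d3] by (rule eventually_conj)
  then obtain N where N: "\<And>k. k \<ge> N \<Longrightarrow> (\<exists>p\<in>P. dist (x k) p < \<delta>/3) \<and> dist (x (Suc k)) (x k) < \<delta>/3"
    unfolding eventually_sequentially by blast
  obtain p where p: "p \<in> P" "dist (x N) p < \<delta>/3" using N[of N] by blast
  have stay: "dist (x k) p < \<delta>/3" if "k \<ge> N" for k
    using that
  proof (induction k rule: dec_induct)
    case base then show ?case using p by simp
  next
    case (step k)
    obtain q where q: "q \<in> P" "dist (x (Suc k)) q < \<delta>/3" using N[of "Suc k"] step by auto
    have "dist p q \<le> dist p (x k) + dist (x k) (x (Suc k)) + dist (x (Suc k)) q"
      by (metis dist_triangle add.commute order_trans add_right_mono)
    also have "\<dots> < \<delta>" using step.IH q N[OF step.hyps(1)] by (simp add: dist_commute)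
    finally have "p = q" using sep[OF p(1) q(1)] by (cases "p = q") auto
    then show ?case using q by simp
  qed
  have "x \<longlonglongrightarrow> p"
  proof (rule tendstoI)
    fix e :: real assume e: "e > 0"
    define e' where "e' = min e (\<delta>/3)"
    have e': "e' > 0" using e dpos unfolding e'_def by simp
    have "eventually (\<lambda>k. (\<exists>q\<in>P. dist (x k) q < e') \<and> k \<ge> N) sequentially"
      using near[OF e'] eventually_ge_at_top by (rule eventually_conj)
    then show "eventually (\<lambda>k. dist (x k) p < e) sequentially"
    proof (rule eventually_mono)
      fix k assume k: "(\<exists>q\<in>P. dist (x k) q < e') \<and> k \<ge> N"
      then obtain q where q: "q \<in> P" "dist (x k) q < e'" by blast
      have "dist p q \<le> dist p (x k) + dist (x k) q" by (rule dist_triangle)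
      also have "\<dots> < \<delta>"
      proof -
        have a: "dist p (x k) < \<delta>/3" using stay[of k] k by (simp add: dist_commute)
        have b: "dist (x k) q < \<delta>/3" using q(2) unfolding e'_def by simp
        show ?thesis using a b dpos by linarith
      qed
      finally have "p = q" using sep[OF p(1) q(1)] by (cases "p = q") auto
      then show "dist (x k) p < e" using q(2) unfolding e'_def by simp
    qed
  qed
  then show ?thesis using p(1) by blast
qed

lemma quad_id:
  fixes A :: "real ^ 'n ^ 'm"
  shows "(norm (A *v v - b))\<^sup>2 = (norm (A *v u - b))\<^sup>2
     + (2 *\<^sub>R (transpose A *v (A *v u - b))) \<bullet> (v - u) + (norm (A *v (v - u)))\<^sup>2"
proof -
  have e: "A *v v - b = (A *v u - b) + A *v (v - u)" by (simp add: matrix_vector_mult_diff_distrib)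
  have "(norm ((A *v u - b) + A *v (v - u)))\<^sup>2 = (norm (A *v u - b))\<^sup>2 + 2 * ((A *v u - b) \<bullet> (A *v (v - u))) + (norm (A *v (v - u)))\<^sup>2"
    unfolding power2_norm_eq_inner by (simp add: inner_add_left inner_add_right inner_commute)
  then show ?thesis unfolding e inner_scaleR_left adj by simp
qed

theorem theorem3p2:
  fixes A :: "real ^ 'n ^ 'm" and b :: "real ^ 'm" and s :: nat and L :: real
    and f :: "real ^ 'n \<Rightarrow> real" and g :: "real ^ 'n \<Rightarrow> real ^ 'n"
    and x :: "nat \<Rightarrow> real ^ 'n"
  assumes "s_regular s A"
    and "0 < s" and "s < CARD('n)"
    and "\<And>y. f y = (norm (A *v y - b))\<^sup>2"
    and "\<And>y. (f has_derivative (\<lambda>h. g y \<bullet> h)) (at y)"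
    and "L > 2 * lambda_max (transpose A ** A)"
    and "IHT_seq s L g x"
  shows "\<exists>xs. x \<longlonglongrightarrow> xs \<and> L_stationary s L g xs"
proof -
  note reg = assms(1) and fdef = assms(4) and Lgt = assms(6) and iht = assms(7)
  have sn: "s \<le> CARD('n)" using assms(3) by simp
  have geq: "\<And>y. g y = 2 *\<^sub>R (transpose A *v (A *v y - b))"
    using grad_eq[OF assms(4,5)] by blast
  define lam where "lam = lambda_max (transpose A ** A)"
  have lam0: "lam \<ge> 0" and lamb: "\<And>h. (norm (A *v h))\<^sup>2 \<le> lam * (norm h)\<^sup>2"
    using rayleigh[of A] unfolding lam_def by auto
  have Lpos: "L > 0" using Lgt lam0 lam_def by simp
  define c where "c = L/2 - lam"
  have cpos: "c > 0" using Lgt lam_def c_def by simp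
  have xs: "x k \<in> sparse_set s" for k
    using iht unfolding IHT_seq_def proj_sparse_def by (cases k) auto
  have proj: "(norm (x (Suc k) - (x k - (1/L) *\<^sub>R g (x k))))\<^sup>2 \<le> (norm (z - (x k - (1/L) *\<^sub>R g (x k))))\<^sup>2"
    if "z \<in> sparse_set s" for k z
    using iht that unfolding IHT_seq_def proj_sparse_def by blast
  have fq: "f v = f u + g u \<bullet> (v - u) + (norm (A *v (v - u)))\<^sup>2" for u v
    unfolding fdef geq by (rule quad_id)
  have desc: "c * (norm (x (Suc k) - x k))\<^sup>2 \<le> f (x k) - f (x (Suc k))" for k
  proof -
    define D where "D = x (Suc k) - x k"
    define G where "G = g (x k)"
    have "(norm (D + (1/L) *\<^sub>R G))\<^sup>2 \<le> (norm ((1/L) *\<^sub>R G))\<^sup>2"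
      using proj[OF xs[of k], of k] unfolding D_def G_def by (simp add: algebra_simps)
    then have "(norm D)\<^sup>2 + 2 * (1/L) * (G \<bullet> D) \<le> 0"
      unfolding power2_norm_eq_inner by (simp add: inner_add_left inner_add_right inner_commute)
    then have "L/2 * ((norm D)\<^sup>2 + 2 * (1/L) * (G \<bullet> D)) \<le> 0"
      using Lpos by (simp add: mult_nonneg_nonpos)
    then have gD: "G \<bullet> D \<le> - (L/2) * (norm D)\<^sup>2" using Lpos by (simp add: algebra_simps)
    have "f (x (Suc k)) = f (x k) + G \<bullet> D + (norm (A *v D))\<^sup>2"
      using fq[of "x (Suc k)" "x k"] unfolding D_def G_def by simp
    then show ?thesis using gD lamb[of D] unfolding c_def D_def[symmetric] by (simp add: algebra_simps)
  qed
  have dec: "f (x (Suc k)) \<le> f (x k)" for k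
    using desc[of k] cpos by (metis diff_ge_0_iff_ge mult_nonneg_nonneg order_trans zero_le_power2 less_imp_le)
  have fnn: "f y \<ge> 0" for y using fdef by simp
  have decs: "antimono_on UNIV (\<lambda>k. f (x k))"
    using decseq_SucI[of "\<lambda>k. f (x k)", OF dec] by simp
  obtain F where F: "(\<lambda>k. f (x k)) \<longlonglongrightarrow> F"
    using decseq_convergent[OF decs, of 0] fnn by blast
  have fdiff: "(\<lambda>k. f (x k) - f (x (Suc k))) \<longlonglongrightarrow> 0"
    using tendsto_diff[OF F LIMSEQ_Suc[OF F]] by simp
  have dsq: "(\<lambda>k. (norm (x (Suc k) - x k))\<^sup>2) \<longlonglongrightarrow> 0"
  proof (rule tendsto_sandwich[of "\<lambda>k. 0" _ _ "\<lambda>k. (f (x k) - f (x (Suc k))) / c"])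
    show "\<forall>\<^sub>F n in sequentially. 0 \<le> (norm (x (Suc n) - x n))\<^sup>2" by simp
    show "\<forall>\<^sub>F n in sequentially. (norm (x (Suc n) - x n))\<^sup>2 \<le> (f (x n) - f (x (Suc n))) / c"
      using desc cpos by (simp add: field_simps mult.commute)
    show "(\<lambda>k. 0) \<longlonglongrightarrow> (0::real)" by simp
    show "(\<lambda>k. (f (x k) - f (x (Suc k))) / c) \<longlonglongrightarrow> 0" using tendsto_divide_zero[OF fdiff] by simp
  qed
  have dstep: "(\<lambda>k. dist (x (Suc k)) (x k)) \<longlonglongrightarrow> 0"
  proof -
    have "(\<lambda>k. sqrt ((norm (x (Suc k) - x k))\<^sup>2)) \<longlonglongrightarrow> sqrt 0" by (rule tendsto_real_sqrt[OF dsq])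
    then show ?thesis by (simp add: dist_norm)
  qed
  have Dz: "(\<lambda>k. x (Suc k) - x k) \<longlonglongrightarrow> 0"
    using dstep by (simp add: dist_norm tendsto_norm_zero_iff)
  have fle: "f (x k) \<le> f (x 0)" for k
    by (induction k) (auto intro: order_trans[OF dec])
  define R where "R = sqrt (f (x 0)) + norm b"
  have "norm (A *v x k) \<le> R" for k
  proof -
    have "norm (A *v x k - b) \<le> sqrt (f (x 0))"
      using fle[of k] fdef[of "x k"] by (metis norm_ge_zero real_le_rsqrt)
    then show ?thesis unfolding R_def by (metis add_le_cancel_right diff_add_cancel norm_triangle_le)
  qed
  then have bnd: "bounded (range x)"
    using xs by (intro bounded_subset[OF sparse_bounded[OF reg sn, of R]]) auto
  have blin: "bounded_linear ((*v) M)" for M :: "real ^ 'n ^ 'm"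
    by (simp add: linear_conv_bounded_linear)
  have blin2: "bounded_linear ((*v) M)" for M :: "real ^ 'm ^ 'n"
    by (simp add: linear_conv_bounded_linear)
  have gcont: "(\<lambda>k. g (y k)) \<longlonglongrightarrow> g l" if "y \<longlonglongrightarrow> l" for y l
    unfolding geq
    by (intro tendsto_intros bounded_linear.tendsto[OF blin2] bounded_linear.tendsto[OF blin] that)
  have lim: "L_stationary s L g l" if r: "strict_mono r" and xr: "(x \<circ> r) \<longlonglongrightarrow> l" for r l
  proof -
    have ev: "\<forall>i\<in>{i. l $ i \<noteq> 0}. eventually (\<lambda>k. x (r k) $ i \<noteq> 0) sequentially"
      using tendsto_imp_eventually_ne[OF tendsto_vec_nth[OF xr]] by (simp add: o_def)
    have "eventually (\<lambda>k. \<forall>i\<in>{i. l $ i \<noteq> 0}. x (r k) $ i \<noteq> 0) sequentially"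
      by (rule eventually_ball_finite[OF _ ev]) simp
    then obtain k where k: "\<forall>i\<in>{i. l $ i \<noteq> 0}. x (r k) $ i \<noteq> 0" by (auto dest: eventually_happens)
    then have "card {i. l $ i \<noteq> 0} \<le> card {i. x (r k) $ i \<noteq> 0}" by (intro card_mono) auto
    then have ls: "l \<in> sparse_set s" using xs[of "r k"] unfolding sparse_set_def l0norm_def by simp
    have xr': "(\<lambda>k. x (r k)) \<longlonglongrightarrow> l" using xr by (simp add: o_def)
    have xs1: "(\<lambda>k. x (Suc (r k))) \<longlonglongrightarrow> l"
    proof -
      have "(\<lambda>k. x (r k) + (x (Suc (r k)) - x (r k))) \<longlonglongrightarrow> l + 0"
        using tendsto_add[OF xr' LIMSEQ_subseq_LIMSEQ[OF Dz r, unfolded o_def]] .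
      then show ?thesis by simp
    qed
    define y where "y v = v - (1/L) *\<^sub>R g v" for v
    have yl: "(\<lambda>k. y (x (r k))) \<longlonglongrightarrow> y l"
      unfolding y_def by (intro tendsto_intros xr' gcont)
    have "(norm (l - y l))\<^sup>2 \<le> (norm (z - y l))\<^sup>2" if z: "z \<in> sparse_set s" for z
    proof (rule LIMSEQ_le)
      show "(\<lambda>k. (norm (x (Suc (r k)) - y (x (r k))))\<^sup>2) \<longlonglongrightarrow> (norm (l - y l))\<^sup>2"
        by (intro tendsto_intros xs1 yl)
      show "(\<lambda>k. (norm (z - y (x (r k))))\<^sup>2) \<longlonglongrightarrow> (norm (z - y l))\<^sup>2"
        by (intro tendsto_intros yl)
      show "\<exists>N. \<forall>n\<ge>N. (norm (x (Suc (r n)) - y (x (r n))))\<^sup>2 \<le> (norm (z - y (x (r n))))\<^sup>2"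
        using proj[OF z] unfolding y_def by blast
    qed
    then show ?thesis using ls unfolding L_stationary_def proj_sparse_def y_def by blast
  qed
  have fin: "finite {p. L_stationary s L g p}" by (rule stat_finite[OF reg Lpos sn geq])
  from conv_finite_limits[OF bnd dstep fin] lim show ?thesis by blast
qed



end
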